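(* Let $K,L\subset\mathbb{R}^n$ be nonempty compact sets whose boundaries $\partial K$ and $\partial L$ are connected, and suppose that for every $x\in\mathbb{R}^n$, neither $K+x$ is strictly contained in $-L$ nor $-L$ is strictly contained in $K+x$. Then \[K+L=\partial K+\partial L.\]
   Context: $X+Y=\{x+y:x\in X,y\in Y\}$ is the Minkowski sum, $-L=\{-y:y\in L\}$, $K+x=\{k+x:k\in K\}$, and "strictly contained" means contained and not equal. *)

theory Defs
  imports "HOL-Analysis.Analysis"
begin

end

theory Submission imports Defs begin

lemma bnd_frontier_empty:
  fixes S :: "'a::euclidean_space set"
  assumes "bounded S" "frontier S = {}" shows "S = {}"
  using assms frontier_eq_empty not_bounded_UNIV by blast

lemma frontier_neg:
  fixes S :: "'a::euclidean_space set"
  shows "frontier (uminus ` S) = uminus ` frontier S"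
proof -
  have l: "linear (uminus :: 'a \<Rightarrow> 'a)" by (simp add: linear_uminus)
  have i: "inj (uminus :: 'a \<Rightarrow> 'a)" by simp
  show ?thesis unfolding frontier_def
    using closure_injective_linear_image[OF l i] interior_injective_linear_image[OF l i]
    by (simp add: image_set_diff[OF i])
qed

lemma sub: fixes X Y :: "'a::euclidean_space set"
  assumes cX: "closed X" and bY: "bounded Y" and cY: "closed Y"
    and h1: "frontier Y \<subseteq> interior X" and h2: "frontier X \<inter> Y = {}"
  shows "Y \<subseteq> X"
proof -
  have clI: "closed (Y \<inter> - interior X)"
    using closed_Int[OF cY closed_Compl[OF open_interior[of X]]] .
  have f1: "frontier (Y \<inter> - interior X) \<subseteq> frontier Y \<union> frontier (- interior X)"
    by (rule frontier_Int_subset)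
  have f2: "frontier (Y \<inter> - interior X) \<subseteq> Y \<inter> - interior X"
    using frontier_subset_closed[OF clI] .
  have f3: "frontier (- interior X) \<subseteq> frontier X"
    using frontier_interior_subset[of X] by simp
  have "frontier (Y \<inter> - interior X) = {}"
  proof -
    { fix p assume p: "p \<in> frontier (Y \<inter> - interior X)"
      then have "p \<in> Y" "p \<notin> interior X" using f2 by auto
      moreover have "p \<in> frontier Y \<or> p \<in> frontier X" using p f1 f3 by blast
      ultimately have False using h1 h2 by blast }
    then show ?thesis by blast
  qed
  then have "Y \<inter> - interior X = {}" using bnd_frontier_empty[of "Y \<inter> - interior X"] bY
    by (meson bounded_Int)
  then show ?thesis using interior_subset by blast
qed

lemma key:
  fixes A B :: "'a::euclidean_space set"
  assumes cA: "compact A" and cB: "compact B"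
    and fA: "connected (frontier A)" and fB: "connected (frontier B)"
    and AB: "A \<inter> B \<noteq> {}" and n1: "\<not> A \<subset> B" and n2: "\<not> B \<subset> A"
  shows "frontier A \<inter> frontier B \<noteq> {}"
proof
  assume D: "frontier A \<inter> frontier B = {}"
  have clA: "closed A" and clB: "closed B" using cA cB compact_imp_closed by auto
  have bA: "bounded A" and bB: "bounded B" using cA cB compact_imp_bounded by auto
  have neA: "frontier A \<noteq> {}" using AB bnd_frontier_empty[OF bA] by blast
  have neB: "frontier B \<noteq> {}" using AB bnd_frontier_empty[OF bB] by blast
  have Asplit: "A = interior A \<union> frontier A" using clA
    by (metis Diff_partition closure_closed frontier_def interior_subset)
  have Bsplit: "B = interior B \<union> frontier B" using clB
    by (metis Diff_partition closure_closed frontier_def interior_subset)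
  have fsA: "frontier A \<subseteq> A" and fsB: "frontier B \<subseteq> B"
    using clA clB frontier_subset_closed by auto
  have cBA: "frontier B \<subseteq> interior A \<or> frontier B \<inter> A = {}"
  proof -
    have "frontier B \<subseteq> interior A \<union> (- A)" using D Asplit by blast
    moreover have "interior A \<inter> (- A) \<inter> frontier B = {}" using interior_subset by blast
    ultimately have "interior A \<inter> frontier B = {} \<or> (- A) \<inter> frontier B = {}"
      using connectedD[OF fB open_interior] clA by (simp add: open_Compl)
    then show ?thesis using \<open>frontier B \<subseteq> interior A \<union> (- A)\<close> by blast
  qed
  have cAB: "frontier A \<subseteq> interior B \<or> frontier A \<inter> B = {}"
  proof -
    have "frontier A \<subseteq> interior B \<union> (- B)" using D Bsplit by blast
    moreover have "interior B \<inter> (- B) \<inter> frontier A = {}" using interior_subset by blast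
    ultimately have "interior B \<inter> frontier A = {} \<or> (- B) \<inter> frontier A = {}"
      using connectedD[OF fA open_interior] clB by (simp add: open_Compl)
    then show ?thesis using \<open>frontier A \<subseteq> interior B \<union> (- B)\<close> by blast
  qed
  show False
  proof (cases "frontier B \<subseteq> interior A")
    case b1: True
    show ?thesis
    proof (cases "frontier A \<subseteq> interior B")
      case True
      have "frontier (A \<union> B) \<subseteq> frontier A \<union> frontier B" by (rule frontier_Un_subset)
      moreover have "frontier A \<union> frontier B \<subseteq> interior (A \<union> B)"
        using True b1 interior_mono[of A "A \<union> B"] interior_mono[of B "A \<union> B"] by blast
      moreover have "frontier (A \<union> B) \<inter> interior (A \<union> B) = {}"
        by (auto simp: frontier_def)
      ultimately have "frontier (A \<union> B) = {}" by blast
      moreover have "bounded (A \<union> B)" using bA bB by simp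
      ultimately show ?thesis using bnd_frontier_empty[of "A \<union> B"] AB by blast
    next
      case False
      then have "frontier A \<inter> B = {}" using cAB by blast
      then have "B \<subseteq> A" using sub[OF clA bB clB b1] by blast
      moreover have "B \<noteq> A" using b1 neB by (auto simp: frontier_def)
      ultimately show ?thesis using n2 by blast
    qed
  next
    case False
    then have h: "frontier B \<inter> A = {}" using cBA by blast
    show ?thesis
    proof (cases "frontier A \<subseteq> interior B")
      case True
      then have "A \<subseteq> B" using sub[OF clB bA clA True h] by blast
      moreover have "B \<noteq> A" using True neA by (auto simp: frontier_def)
      ultimately show ?thesis using n1 by blast
    next
      case False
      then have h2: "frontier A \<inter> B = {}" using cAB by blast
      have "frontier (A \<inter> B) \<subseteq> (frontier A \<union> frontier B) \<inter> (A \<inter> B)"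
        using frontier_Int_subset[of A B] frontier_subset_closed[of "A \<inter> B"] clA clB
        by (simp add: closed_Int)
      then have "frontier (A \<inter> B) = {}" using h h2 by blast
      moreover have "bounded (A \<inter> B)" using bA bounded_Int by blast
      ultimately show ?thesis using bnd_frontier_empty[of "A \<inter> B"] AB by blast
    qed
  qed
qed


theorem theorem4:
  fixes K L :: "'a::euclidean_space set"
  assumes "compact K" "K \<noteq> {}" "compact L" "L \<noteq> {}"
    and "connected (frontier K)" "connected (frontier L)"
    and "\<forall>x. \<not> ((\<lambda>k. k + x) ` K \<subset> uminus ` L) \<and> \<not> (uminus ` L \<subset> (\<lambda>k. k + x) ` K)"
  shows "{k + l | k l. k \<in> K \<and> l \<in> L} = {k + l | k l. k \<in> frontier K \<and> l \<in> frontier L}"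
proof
  have fK: "frontier K \<subseteq> K" and fL: "frontier L \<subseteq> L"
    using assms(1,3) compact_imp_closed frontier_subset_closed by auto
  then show "{k + l | k l. k \<in> frontier K \<and> l \<in> frontier L} \<subseteq> {k + l | k l. k \<in> K \<and> l \<in> L}"
    by blast
  show "{k + l | k l. k \<in> K \<and> l \<in> L} \<subseteq> {k + l | k l. k \<in> frontier K \<and> l \<in> frontier L}"
  proof
    fix z assume "z \<in> {k + l | k l. k \<in> K \<and> l \<in> L}"
    then obtain k l where kl: "k \<in> K" "l \<in> L" "z = k + l" by blast
    define A where "A = (\<lambda>k. k + (- z)) ` K"
    define B where "B = uminus ` L"
    have A': "A = (+) (- z) ` K" unfolding A_def by (auto simp: add.commute)
    have cA: "compact A" unfolding A' using compact_translation assms(1) by blast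
    have cB: "compact B" unfolding B_def using compact_negations[OF assms(3)] by simp
    have frA: "frontier A = (+) (- z) ` frontier K" unfolding A' by (rule frontier_translation)
    have frB: "frontier B = uminus ` frontier L" unfolding B_def by (rule frontier_neg)
    have "connected (frontier A)" unfolding frA
      by (rule connected_continuous_image[OF _ assms(5)]) (intro continuous_intros)
    moreover have "connected (frontier B)" unfolding frB
      by (rule connected_continuous_image[OF _ assms(6)]) (intro continuous_intros)
    moreover have "A \<inter> B \<noteq> {}"
    proof -
      have "k + - z \<in> A" using kl unfolding A_def by blast
      moreover have "k + - z = - l" using kl by simp
      moreover have "- l \<in> B" using kl unfolding B_def by blast
      ultimately show ?thesis by auto
    qed
    moreover have "\<not> A \<subset> B" "\<not> B \<subset> A" using assms(7) unfolding A_def B_def by blast+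
    ultimately have "frontier A \<inter> frontier B \<noteq> {}" using key cA cB by blast
    then obtain p where p: "p \<in> frontier A" "p \<in> frontier B" by blast
    then obtain k' l' where "k' \<in> frontier K" "l' \<in> frontier L" "p = - z + k'" "p = - l'"
      unfolding frA frB by blast
    then have "- l' = - z + k'" by simp
    then have "l' = z - k'" by (simp add: algebra_simps)
    then have "z = k' + l'" by simp
    then show "z \<in> {k + l | k l. k \<in> frontier K \<and> l \<in> frontier L}"
      using \<open>k' \<in> frontier K\<close> \<open>l' \<in> frontier L\<close> by blast
  qed
qed

end
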